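(* Let $(T,X)$ be a non-minimal M-dynamic ($T$ a topological group or monoid, $X$ a Hausdorff uniform space, not necessarily compact). Then $(T,X)$ is sensitive to initial conditions on $X$.
   Context: $\mathscr U_X$ is a compatible symmetric uniformity of $X$. $A\subseteq T$ is syndetic if there is compact $K\subseteq T$ with $Kt\cap A\ne\emptyset$ for all $t$. A point $x$ is a.p. if $\{t:tx\in U\}$ is syndetic for every neighborhood $U$ of $x$. The dynamic is topologically transitive if $\{t:V\cap tU\ne\emptyset\}\ne\emptyset$ for all nonempty open $U,V$; it is an M-dynamic if it is topologically transitive with a dense set of a.p. points. Minimal means every orbit is dense. Sensitive to initial conditions on $X$: there is $\varepsilon\in\mathscr U_X$ such that for every $x\in X$ and every neighborhood $U$ of $x$ there exist $y\in U$ and $t\in T$ with $(tx,ty)\notin\varepsilon$. *)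

theory Defs
  imports "HOL-Analysis.Analysis"
begin

text \<open>A dynamic (T,X): a topological monoid T (groups are special cases) acting
  continuously (jointly) on the left on a space X; \<open>act t x\<close> stands for \<open>tx\<close>.\<close>
definition dynamic :: "('m::topological_monoid_mult \<Rightarrow> 'x::topological_space \<Rightarrow> 'x) \<Rightarrow> bool" where
  "dynamic act \<longleftrightarrow>
     (\<forall>x. act 1 x = x) \<and> (\<forall>s t x. act (s * t) x = act s (act t x)) \<and>
     continuous_on UNIV (\<lambda>p. act (fst p) (snd p))"

definition syndetic :: "'m::{topological_space, times} set \<Rightarrow> bool" where
  "syndetic A \<longleftrightarrow> (\<exists>K. compact K \<and> (\<forall>t. (\<lambda>k. k * t) ` K \<inter> A \<noteq> {}))"

definition almost_periodic_point :: "('m::topological_monoid_mult \<Rightarrow> 'x::topological_space \<Rightarrow> 'x) \<Rightarrow> 'x \<Rightarrow> bool" where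
  "almost_periodic_point act x \<longleftrightarrow>
     (\<forall>U. open U \<and> x \<in> U \<longrightarrow> syndetic {t. act t x \<in> U})"

definition top_transitive :: "('m \<Rightarrow> 'x::topological_space \<Rightarrow> 'x) \<Rightarrow> bool" where
  "top_transitive act \<longleftrightarrow>
     (\<forall>U V. open U \<and> open V \<and> U \<noteq> {} \<and> V \<noteq> {} \<longrightarrow> {t. V \<inter> act t ` U \<noteq> {}} \<noteq> {})"

definition M_dynamic :: "('m::topological_monoid_mult \<Rightarrow> 'x::topological_space \<Rightarrow> 'x) \<Rightarrow> bool" where
  "M_dynamic act \<longleftrightarrow> top_transitive act \<and>
     closure {x. almost_periodic_point act x} = UNIV"

definition minimal_dynamic :: "('m \<Rightarrow> 'x::topological_space \<Rightarrow> 'x) \<Rightarrow> bool" where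
  "minimal_dynamic act \<longleftrightarrow> (\<forall>x. closure (range (\<lambda>t. act t x)) = UNIV)"

definition sensitive :: "('m \<Rightarrow> 'x::uniform_space \<Rightarrow> 'x) \<Rightarrow> bool" where
  "sensitive act \<longleftrightarrow>
     (\<exists>\<epsilon>. eventually (\<lambda>p. p \<in> \<epsilon>) uniformity \<and>
        (\<forall>x U. open U \<and> x \<in> U \<longrightarrow> (\<exists>y\<in>U. \<exists>t. (act t x, act t y) \<notin> \<epsilon>)))"

end

theory Submission
  imports Defs
begin

lemma ent_half:
  fixes E :: "('x::uniform_space \<times> 'x) \<Rightarrow> bool"
  assumes "eventually E uniformity"
  shows "\<exists>D. eventually D uniformity \<and> (\<forall>a b. D (a,b) \<longrightarrow> D (b,a)) \<and>
            (\<forall>a b c. D (a,b) \<longrightarrow> D (b,c) \<longrightarrow> E (a,c))"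
proof -
  obtain D0 where D0: "eventually D0 uniformity" "\<And>x y z. D0 (x, y) \<Longrightarrow> D0 (y, z) \<Longrightarrow> E (x, z)"
    using uniformity_transE[OF assms] by blast
  define D where "D = (\<lambda>p. D0 p \<and> D0 (snd p, fst p))"
  have "eventually (\<lambda>(x, y). D0 (y, x)) uniformity" using uniformity_sym[OF D0(1)] .
  hence "eventually D uniformity"
    using D0(1) unfolding D_def by (auto elim: eventually_elim2)
  moreover have "\<forall>a b. D (a,b) \<longrightarrow> D (b,a)" unfolding D_def by auto
  moreover have "\<forall>a b c. D (a,b) \<longrightarrow> D (b,c) \<longrightarrow> E (a,c)" unfolding D_def using D0(2) by auto
  ultimately show ?thesis by blast
qed

lemma ent_nbhd:
  fixes D :: "('x::uniform_space \<times> 'x) \<Rightarrow> bool"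
  assumes "eventually D uniformity"
  shows "\<exists>Ob. open Ob \<and> a \<in> Ob \<and> (\<forall>y\<in>Ob. D (a,y))"
proof -
  have "eventually (\<lambda>(x', y). x' = a \<longrightarrow> D (a, y)) uniformity"
    using assms by (rule eventually_mono) auto
  hence "eventually (\<lambda>y. D (a,y)) (nhds a)" by (simp add: eventually_nhds_uniformity)
  thus ?thesis unfolding eventually_nhds by blast
qed

lemma equi:
  fixes act :: "'m::topological_monoid_mult \<Rightarrow> 'x::uniform_space \<Rightarrow> 'x"
  assumes dyn: "dynamic act" and C: "compact C" and E: "eventually E uniformity"
  shows "\<exists>N. open N \<and> z \<in> N \<and> (\<forall>c\<in>C. \<forall>w\<in>N. E (act c w, act c z))"
proof -
  obtain D where D: "eventually D uniformity" "\<forall>a b. D (a,b) \<longrightarrow> D (b,a)"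
      "\<forall>a b c. D (a,b) \<longrightarrow> D (b,c) \<longrightarrow> E (a,c)"
    using ent_half[OF E] by blast
  let ?f = "\<lambda>p. act (fst p) (snd p)"
  have cont: "continuous_on UNIV ?f" using dyn unfolding dynamic_def by blast
  define P where "P = (\<lambda>c A B. open A \<and> open B \<and> c \<in> A \<and> z \<in> B \<and>
          (\<forall>c'\<in>A. \<forall>w\<in>B. D (act c z, act c' w)))"
  have ex: "\<forall>c. \<exists>A B. P c A B"
  proof
    fix c
    obtain Ob where Ob: "open Ob" "act c z \<in> Ob" "\<forall>y\<in>Ob. D (act c z, y)"
      using ent_nbhd[OF D(1)] by blast
    have "open (?f -` Ob)" using cont Ob(1) by (simp add: continuous_on_open_vimage)
    moreover have "(c,z) \<in> ?f -` Ob" using Ob(2) by simp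
    ultimately obtain A B where "open A" "open B" "(c,z) \<in> A \<times> B" "A \<times> B \<subseteq> ?f -` Ob"
      by (rule open_prod_elim)
    hence "P c A B" unfolding P_def using Ob(3) by force
    thus "\<exists>A B. P c A B" by blast
  qed
  have "\<forall>c. \<exists>AB. P c (fst AB) (snd AB)" using ex by auto
  then obtain AB where "\<forall>c. P c (fst (AB c)) (snd (AB c))" by (metis choice)
  then obtain A B where AB0: "\<And>c. P c (A c) (B c)"
    by (rule_tac A="\<lambda>c. fst (AB c)" and B="\<lambda>c. snd (AB c)" in that) blast
  have AB: "\<And>c. open (A c)" "\<And>c. open (B c)" "\<And>c. c \<in> A c" "\<And>c. z \<in> B c"
     "\<And>c c' w. c' \<in> A c \<Longrightarrow> w \<in> B c \<Longrightarrow> D (act c z, act c' w)"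
    using AB0 unfolding P_def by blast+
  obtain C' where C': "C' \<subseteq> C" "finite C'" "C \<subseteq> (\<Union>c\<in>C'. A c)"
    using compactE_image[OF C, of C A] AB(1,3) by blast
  define N where "N = (\<Inter>c\<in>C'. B c)"
  have "open N" unfolding N_def using C'(2) AB(2) by auto
  moreover have "z \<in> N" unfolding N_def using AB(4) by auto
  moreover have "\<forall>c\<in>C. \<forall>w\<in>N. E (act c w, act c z)"
  proof (intro ballI)
    fix c' w assume c': "c' \<in> C" and w: "w \<in> N"
    then obtain c where c: "c \<in> C'" "c' \<in> A c" using C'(3) by blast
    have "w \<in> B c" using w c(1) unfolding N_def by auto
    hence "D (act c z, act c' w)" "D (act c z, act c' z)" using AB(4,5) c(2) by auto
    thus "E (act c' w, act c' z)" using D(2,3) by blast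
  qed
  ultimately show ?thesis by blast
qed

theorem theorem4:
  fixes act :: "'m::topological_monoid_mult \<Rightarrow> 'x::{uniform_space, t2_space} \<Rightarrow> 'x"
  assumes "dynamic act"
    and "M_dynamic act"
    and "\<not> minimal_dynamic act"
  shows "sensitive act"
proof (rule ccontr)
  assume ns: "\<not> sensitive act"
  have act1: "\<And>s t x. act (s * t) x = act s (act t x)" using assms(1) unfolding dynamic_def by blast
  have tt: "\<And>U V. open U \<Longrightarrow> open V \<Longrightarrow> U \<noteq> {} \<Longrightarrow> V \<noteq> {} \<Longrightarrow> \<exists>t y. y \<in> U \<and> act t y \<in> V"
    using assms(2) unfolding M_dynamic_def top_transitive_def by blast
  have apd: "closure {x. almost_periodic_point act x} = UNIV"
    using assms(2) unfolding M_dynamic_def by blast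
  have hit: "\<exists>t. act t z \<in> V" if V: "open V" "v \<in> V" for z v V
  proof -
    have E0: "eventually (\<lambda>(x', y). x' = v \<longrightarrow> y \<in> V) uniformity"
      using V open_uniformity by blast
    obtain D1 where D1: "eventually D1 uniformity" "\<forall>a b. D1 (a,b) \<longrightarrow> D1 (b,a)"
      "\<forall>a b c. D1 (a,b) \<longrightarrow> D1 (b,c) \<longrightarrow> (\<lambda>(x', y). x' = v \<longrightarrow> y \<in> V) (a,c)"
      using ent_half[OF E0] by blast
    obtain D2 where D2: "eventually D2 uniformity" "\<forall>a b. D2 (a,b) \<longrightarrow> D2 (b,a)"
      "\<forall>a b c. D2 (a,b) \<longrightarrow> D2 (b,c) \<longrightarrow> D1 (a,c)"
      using ent_half[OF D1(1)] by blast
    obtain D where D: "eventually D uniformity" "\<forall>a b. D (a,b) \<longrightarrow> D (b,a)"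
      "\<forall>a b c. D (a,b) \<longrightarrow> D (b,c) \<longrightarrow> D2 (a,c)"
      using ent_half[OF D2(1)] by blast
    have chain: "act t z \<in> V" if "D (v,a)" "D (a,b)" "D (b,c)" "D (c,d)" "D (d,e)" "D (e, act t z)"
      for a b c d e t
    proof -
      have a1: "D2 (v,b)" using that(1,2) D(3) by blast
      have a2: "D2 (b,d)" using that(3,4) D(3) by blast
      have a3: "D2 (d, act t z)" using that(5,6) D(3) by blast
      have a4: "D2 (act t z, act t z)" using uniformity_refl[OF D2(1)] .
      have b1: "D1 (v,d)" using a1 a2 D2(3) by blast
      have b2: "D1 (d, act t z)" using a3 a4 D2(3) by blast
      have "(\<lambda>(x', y). x' = v \<longrightarrow> y \<in> V) (v, act t z)" using b1 b2 D1(3) by blast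
      thus ?thesis by simp
    qed
    have "eventually (\<lambda>p. p \<in> Collect D) uniformity" using D(1) by simp
    with ns have "\<not> (\<forall>x U. open U \<and> x \<in> U \<longrightarrow> (\<exists>y\<in>U. \<exists>t. (act t x, act t y) \<notin> Collect D))"
      unfolding sensitive_def by blast
    then obtain x U where U: "open U" "x \<in> U" "\<forall>y\<in>U. \<forall>t. D (act t x, act t y)"
      by auto
    obtain q where q: "q \<in> U" "almost_periodic_point act q"
      using open_Int_closure_eq_empty[OF U(1), of "{x. almost_periodic_point act x}"] apd U(2) by auto
    have "syndetic {t. act t q \<in> U}" using q U(1) unfolding almost_periodic_point_def by blast
    then obtain K where K: "compact K" "\<forall>t. (\<lambda>k. k * t) ` K \<inter> {t. act t q \<in> U} \<noteq> {}"
      unfolding syndetic_def by blast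
    obtain Ob where Ob: "open Ob" "v \<in> Ob" "\<forall>y\<in>Ob. D (v,y)" using ent_nbhd[OF D(1)] by blast
    obtain r0 y1 where r0: "y1 \<in> U" "act r0 y1 \<in> Ob" using tt[OF U(1) Ob(1)] U(2) Ob(2) by blast
    have "compact ((\<lambda>k. r0 * k) ` K)"
      by (rule compact_continuous_image[OF _ K(1)]) (intro continuous_intros)
    then obtain N where N: "open N" "z \<in> N" "\<forall>c\<in>(\<lambda>k. r0 * k) ` K. \<forall>w\<in>N. D (act c w, act c z)"
      using equi[OF assms(1) _ D(1)] by blast
    obtain s y where sy: "y \<in> U" "act s y \<in> N" using tt[OF U(1) N(1)] U(2) N(2) by blast
    obtain k where k: "k \<in> K" "act (k * s) q \<in> U" using K(2) by blast
    have 1: "D (v, act r0 y1)" using Ob(3) r0(2) by blast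
    have 2: "D (act r0 y1, act r0 x)" using U(3) r0(1) D(2) by blast
    have 3: "D (act r0 x, act (r0 * k * s) q)" proof -
      have "D (act r0 x, act r0 (act (k * s) q))" using U(3) k(2) by blast
      thus ?thesis by (simp add: act1 mult.assoc)
    qed
    have 4: "D (act (r0 * k * s) q, act (r0 * k * s) x)" using U(3) q(1) D(2) by blast
    have 5: "D (act (r0 * k * s) x, act (r0 * k) (act s y))" proof -
      have "D (act (r0 * k * s) x, act (r0 * k * s) y)" using U(3) sy(1) by blast
      thus ?thesis by (simp add: act1)
    qed
    have 6: "D (act (r0 * k) (act s y), act (r0 * k) z)" using N(3) k(1) sy(2) by blast
    show ?thesis using chain[OF 1 2 3 4 5 6] by blast
  qed
  have "minimal_dynamic act"
    unfolding minimal_dynamic_def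
  proof (intro allI)
    fix z
    show "closure (range (\<lambda>t. act t z)) = UNIV"
    proof (rule set_eqI, simp only: UNIV_I simp_thms)
      fix v show "v \<in> closure (range (\<lambda>t. act t z))"
        unfolding closure_iff_nhds_not_empty
      proof (intro allI impI)
        fix A S assume "S \<subseteq> A" "open S" "v \<in> S"
        then obtain t where "act t z \<in> S" using hit by blast
        thus "range (\<lambda>t. act t z) \<inter> A \<noteq> {}" using \<open>S \<subseteq> A\<close> by blast
      qed
    qed
  qed
  thus False using assms(3) by blast
qed

end
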